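(* Let $L$ be a multisorted algebra in the positive quantifier-free signature satisfying axioms (1), (2), (3), and let $F$ be a prime filter of the lattice forming sort $n$ of $L$. Let $F_1,\dots,F_n$ be distinct symbols and $W=\{F_1,\dots,F_n\}$. Define $\varphi\colon L\to A(W)$ on each sort $k$ by $$\varphi(r)=\{\alpha^{\mathrm{tuple}}(F_1,\dots,F_n)\mid \alpha\colon k\to n \text{ a substitution with } \alpha(r)\in F\}.$$ Then $\varphi$ is a morphism of positive quantifier-free algebras.
   Context: Signature. There is a sort $n$ for each natural number $n\ge 0$. For every function $\alpha\colon\{1,\dots,n\}\to\{1,\dots,k\}$ there is a unary function symbol ("substitution") $\alpha\colon n\to k$ (argument of sort $n$, value of sort $k$). For each sort there are constants $0,1$ and binary operations $\vee,\wedge$. This is the positive quantifier-free signature. If $\alpha\colon k\to n$, $\beta\colon n\to m$ are substitutions, $\beta\circ\alpha\colon k\to m$ is the substitution symbol of the composite function, while $\beta(\alpha(r))$ is composition inside an algebra. For a set $W$ and substitution $\alpha\colon\{1,\dots,n\}\to\{1,\dots,k\}$: $\alpha^{\mathrm{tuple}}\colon W^k\to W^n$, $\alpha^{\mathrm{tuple}}(x_1,\dots,x_k)=(x_{\alpha(1)},\dots,x_{\alpha(n)})$, and $\alpha^{\mathrm{relation}}(r)=\{\bar x\in W^k:\alpha^{\mathrm{tuple}}(\bar x)\in r\}$ for $r\subseteq W^n$. The positive quantifier-free algebra $A(W)$ interprets sort $n$ as $\mathcal P(W^n)$, $\alpha$ as $\alpha^{\mathrm{relation}}$, and $0,1,\vee,\wedge$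 as $\emptyset,W^n,\cup,\cap$. A morphism is a sort-preserving family of maps commuting with all operations. Axioms: (1) each sort is a bounded distributive lattice under $0,1,\vee,\wedge$; (2) every substitution preserves $0,1,\vee,\wedge$; (3) $(\beta\circ\alpha)(r)=\beta(\alpha(r))$ for all composable substitutions $\alpha\colon k\to n$, $\beta\colon n\to m$ and $r$ of sort $k$. A prime filter of a bounded distributive lattice is a proper, nonempty, upward-closed subset closed under $\wedge$ such that $x\vee y\in F$ implies $x\in F$ or $y\in F$. *)

theory Defs
  imports Main
begin

text \<open>Sorts are natural numbers; all sorts live in one HOL type 'a, with carrier
  pcar k for sort k.  The substitution symbol alpha : n -> k (a function
  {1..n} -> {1..k}) acts by psub n k alpha, from sort n to sort k.\<close>

record 'a pqf_alg =
  pcar  :: "nat \<Rightarrow> 'a set"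
  psub  :: "nat \<Rightarrow> nat \<Rightarrow> (nat \<Rightarrow> nat) \<Rightarrow> 'a \<Rightarrow> 'a"
  pzero :: "nat \<Rightarrow> 'a"
  pone  :: "nat \<Rightarrow> 'a"
  pjoin :: "nat \<Rightarrow> 'a \<Rightarrow> 'a \<Rightarrow> 'a"
  pmeet :: "nat \<Rightarrow> 'a \<Rightarrow> 'a \<Rightarrow> 'a"

text \<open>Substitutions n -> k: functions {1..n} -> {1..k}, represented canonically
  as nat functions that are 0 outside {1..n}.\<close>
definition substs :: "nat \<Rightarrow> nat \<Rightarrow> (nat \<Rightarrow> nat) set" where
  "substs n k = {\<alpha>. (\<forall>i\<in>{1..n}. \<alpha> i \<in> {1..k}) \<and> (\<forall>i. i \<notin> {1..n} \<longrightarrow> \<alpha> i = 0)}"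

definition bounded_distrib_lattice ::
  "'a set \<Rightarrow> 'a \<Rightarrow> 'a \<Rightarrow> ('a \<Rightarrow> 'a \<Rightarrow> 'a) \<Rightarrow> ('a \<Rightarrow> 'a \<Rightarrow> 'a) \<Rightarrow> bool" where
  "bounded_distrib_lattice C z u j m \<longleftrightarrow>
     z \<in> C \<and> u \<in> C \<and> (\<forall>x\<in>C. \<forall>y\<in>C. j x y \<in> C \<and> m x y \<in> C) \<and>
     (\<forall>x\<in>C. \<forall>y\<in>C. \<forall>w\<in>C. j (j x y) w = j x (j y w) \<and> m (m x y) w = m x (m y w)) \<and>
     (\<forall>x\<in>C. \<forall>y\<in>C. j x y = j y x \<and> m x y = m y x) \<and>
     (\<forall>x\<in>C. \<forall>y\<in>C. j x (m x y) = x \<and> m x (j x y) = x) \<and>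
     (\<forall>x\<in>C. \<forall>y\<in>C. \<forall>w\<in>C. m x (j y w) = j (m x y) (m x w)) \<and>
     (\<forall>x\<in>C. j x z = x \<and> m x u = x)"

definition pqf_algebra :: "('a, 'b) pqf_alg_scheme \<Rightarrow> bool" where
  "pqf_algebra L \<longleftrightarrow>
     (\<forall>k. bounded_distrib_lattice (pcar L k) (pzero L k) (pone L k) (pjoin L k) (pmeet L k)) \<and>
     (\<forall>n k \<alpha>. \<alpha> \<in> substs n k \<longrightarrow>
        (\<forall>r\<in>pcar L n. psub L n k \<alpha> r \<in> pcar L k) \<and>
        psub L n k \<alpha> (pzero L n) = pzero L k \<and>
        psub L n k \<alpha> (pone L n) = pone L k \<and>
        (\<forall>r\<in>pcar L n. \<forall>s\<in>pcar L n.
           psub L n k \<alpha> (pjoin L n r s) = pjoin L k (psub L n k \<alpha> r) (psub L n k \<alpha> s) \<and>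
           psub L n k \<alpha> (pmeet L n r s) = pmeet L k (psub L n k \<alpha> r) (psub L n k \<alpha> s))) \<and>
     (\<forall>k n m \<alpha> \<beta>. \<alpha> \<in> substs k n \<longrightarrow> \<beta> \<in> substs n m \<longrightarrow>
        (\<forall>r\<in>pcar L k. psub L k m (\<beta> \<circ> \<alpha>) r = psub L n m \<beta> (psub L k n \<alpha> r)))"

text \<open>Prime filter of a lattice (C, join, meet); order x \<le> y iff meet x y = x.\<close>
definition prime_filter ::
  "'a set \<Rightarrow> ('a \<Rightarrow> 'a \<Rightarrow> 'a) \<Rightarrow> ('a \<Rightarrow> 'a \<Rightarrow> 'a) \<Rightarrow> 'a set \<Rightarrow> bool" where
  "prime_filter C j m F \<longleftrightarrow>
     F \<subseteq> C \<and> F \<noteq> C \<and> F \<noteq> {} \<and>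
     (\<forall>x\<in>F. \<forall>y\<in>C. m x y = x \<longrightarrow> y \<in> F) \<and>
     (\<forall>x\<in>F. \<forall>y\<in>F. m x y \<in> F) \<and>
     (\<forall>x\<in>C. \<forall>y\<in>C. j x y \<in> F \<longrightarrow> x \<in> F \<or> y \<in> F)"

text \<open>Tuples of W^n are lists of length n over W.  For alpha : {1..n} -> {1..k},
  alpha^tuple : W^k -> W^n, (x_1..x_k) |-> (x_alpha(1), .., x_alpha(n)).\<close>
definition tuples :: "'w set \<Rightarrow> nat \<Rightarrow> 'w list set" where
  "tuples W n = {xs. length xs = n \<and> set xs \<subseteq> W}"

definition tuple_sub :: "nat \<Rightarrow> (nat \<Rightarrow> nat) \<Rightarrow> 'w list \<Rightarrow> 'w list" where
  "tuple_sub n \<alpha> xs = map (\<lambda>i. xs ! (\<alpha> i - 1)) [1..<Suc n]"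

definition A_alg :: "'w set \<Rightarrow> 'w list set pqf_alg" where
  "A_alg W = \<lparr> pcar = (\<lambda>n. Pow (tuples W n)),
               psub = (\<lambda>n k \<alpha> r. {xs \<in> tuples W k. tuple_sub n \<alpha> xs \<in> r}),
               pzero = (\<lambda>n. {}),
               pone = (\<lambda>n. tuples W n),
               pjoin = (\<lambda>n r s. r \<union> s),
               pmeet = (\<lambda>n r s. r \<inter> s) \<rparr>"

definition pqf_hom :: "('a, 'c) pqf_alg_scheme \<Rightarrow> ('b, 'd) pqf_alg_scheme \<Rightarrow> (nat \<Rightarrow> 'a \<Rightarrow> 'b) \<Rightarrow> bool" where
  "pqf_hom L M \<phi> \<longleftrightarrow>
     (\<forall>k. \<forall>r\<in>pcar L k. \<phi> k r \<in> pcar M k) \<and>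
     (\<forall>k. \<phi> k (pzero L k) = pzero M k \<and> \<phi> k (pone L k) = pone M k) \<and>
     (\<forall>k. \<forall>r\<in>pcar L k. \<forall>s\<in>pcar L k.
        \<phi> k (pjoin L k r s) = pjoin M k (\<phi> k r) (\<phi> k s) \<and>
        \<phi> k (pmeet L k r s) = pmeet M k (\<phi> k r) (\<phi> k s)) \<and>
     (\<forall>n k \<alpha>. \<alpha> \<in> substs n k \<longrightarrow>
        (\<forall>r\<in>pcar L n. \<phi> k (psub L n k \<alpha> r) = psub M n k \<alpha> (\<phi> n r)))"

end

theory Submission
  imports Defs
begin

lemma bdl_mm: assumes "bounded_distrib_lattice C z u j m" "a \<in> C"
  shows "m a a = a"
proof -
  have "j a (m a a) = a" using assms unfolding bounded_distrib_lattice_def by blast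
  hence "m a a = m a (j a (m a a))" by simp
  also have "\<dots> = a" using assms unfolding bounded_distrib_lattice_def by blast
  finally show ?thesis .
qed

lemma pf_meet: assumes "bounded_distrib_lattice C z u j m" "prime_filter C j m F"
  "a \<in> C" "b \<in> C"
  shows "m a b \<in> F \<longleftrightarrow> a \<in> F \<and> b \<in> F"
proof
  assume h: "m a b \<in> F"
  have aa: "m a a = a" "m b b = b" using bdl_mm assms by metis+
  have ab: "m a b \<in> C" "m b a \<in> C" using assms unfolding bounded_distrib_lattice_def by blast+
  have "m (m a b) a = m a (m b a)" using assms unfolding bounded_distrib_lattice_def by blast
  also have "\<dots> = m a (m a b)" using assms unfolding bounded_distrib_lattice_def by metis
  also have "\<dots> = m (m a a) b" using assms unfolding bounded_distrib_lattice_def by metis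
  finally have 1: "m (m a b) a = m a b" using aa by simp
  have "m (m a b) b = m a (m b b)" using assms unfolding bounded_distrib_lattice_def by blast
  hence 2: "m (m a b) b = m a b" using aa by simp
  show "a \<in> F \<and> b \<in> F" using 1 2 h assms(2,3,4) unfolding prime_filter_def by blast
next
  assume "a \<in> F \<and> b \<in> F"
  thus "m a b \<in> F" using assms(2) unfolding prime_filter_def by blast
qed

lemma pf_join: assumes "bounded_distrib_lattice C z u j m" "prime_filter C j m F"
  "a \<in> C" "b \<in> C"
  shows "j a b \<in> F \<longleftrightarrow> a \<in> F \<or> b \<in> F"
proof
  assume "j a b \<in> F" thus "a \<in> F \<or> b \<in> F" using assms(2,3,4) unfolding prime_filter_def by blast
next
  have c: "j a b \<in> C" using assms unfolding bounded_distrib_lattice_def by blast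
  have 1: "m a (j a b) = a" using assms unfolding bounded_distrib_lattice_def by blast
  have "m b (j a b) = m b (j b a)" using assms unfolding bounded_distrib_lattice_def by metis
  also have "\<dots> = b" using assms unfolding bounded_distrib_lattice_def by blast
  finally have 2: "m b (j a b) = b" .
  assume "a \<in> F \<or> b \<in> F"
  thus "j a b \<in> F" using 1 2 c assms(2) unfolding prime_filter_def by metis
qed

lemma pf_zero: assumes "bounded_distrib_lattice C z u j m" "prime_filter C j m F"
  shows "z \<notin> F"
proof
  assume z: "z \<in> F"
  have "\<forall>y\<in>C. m z y = z"
  proof
    fix y assume y: "y \<in> C"
    have "j z y = y" using assms y unfolding bounded_distrib_lattice_def by metis
    hence "m z y = m z (j z y)" by simp
    also have "\<dots> = z" using assms y unfolding bounded_distrib_lattice_def by blast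
    finally show "m z y = z" .
  qed
  hence "C \<subseteq> F" using z assms(2) unfolding prime_filter_def by blast
  thus False using assms(2) unfolding prime_filter_def by blast
qed

lemma pf_one: assumes "bounded_distrib_lattice C z u j m" "prime_filter C j m F"
  shows "u \<in> F"
proof -
  obtain x where x: "x \<in> F" using assms(2) unfolding prime_filter_def by blast
  hence "x \<in> C" using assms(2) unfolding prime_filter_def by blast
  hence "m x u = x" "u \<in> C" using assms(1) unfolding bounded_distrib_lattice_def by blast+
  thus ?thesis using x assms(2) unfolding prime_filter_def by blast
qed

lemma tuple_sub_nth: "j < k \<Longrightarrow> tuple_sub k \<alpha> xs ! j = xs ! (\<alpha> (Suc j) - 1)"
  unfolding tuple_sub_def by (simp del: upt_Suc add: nth_map)

lemma tuple_sub_len[simp]: "length (tuple_sub k \<alpha> xs) = k"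
  unfolding tuple_sub_def by simp

lemma tuple_sub_in: assumes "\<beta> \<in> substs k n" "length Fs = n"
  shows "tuple_sub k \<beta> Fs \<in> tuples (set Fs) k"
proof -
  have "tuple_sub k \<beta> Fs ! j \<in> set Fs" if "j < k" for j
  proof -
    have "\<beta> (Suc j) \<in> {1..n}" using assms(1) that unfolding substs_def by auto
    hence "Fs ! (\<beta> (Suc j) - 1) \<in> set Fs" using assms(2) by auto
    thus ?thesis using tuple_sub_nth[OF that, of \<beta> Fs] by metis
  qed
  thus ?thesis unfolding tuples_def by (auto simp: in_set_conv_nth)
qed

lemma tuple_sub_inj: assumes "\<alpha> \<in> substs k n" "\<beta> \<in> substs k n" "length Fs = n" "distinct Fs"
  "tuple_sub k \<alpha> Fs = tuple_sub k \<beta> Fs"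
  shows "\<alpha> = \<beta>"
proof
  fix i
  show "\<alpha> i = \<beta> i"
  proof (cases "i \<in> {1..k}")
    case True
    have "tuple_sub k \<alpha> Fs ! (i - 1) = tuple_sub k \<beta> Fs ! (i - 1)" using assms(5) by simp
    then obtain j where j: "i = Suc j" "j < k" using True by (cases i) auto
    hence e: "Fs ! (\<alpha> i - 1) = Fs ! (\<beta> i - 1)"
      using \<open>tuple_sub k \<alpha> Fs ! (i - 1) = _\<close> tuple_sub_nth[OF j(2), of \<alpha> Fs]
        tuple_sub_nth[OF j(2), of \<beta> Fs] by (metis diff_Suc_1)
    have "\<alpha> i \<in> {1..n}" "\<beta> i \<in> {1..n}" using True assms(1,2) unfolding substs_def by auto
    hence "\<alpha> i - 1 = \<beta> i - 1" using e assms(3,4) nth_eq_iff_index_eq by fastforce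
    thus ?thesis using \<open>\<alpha> i \<in> {1..n}\<close> \<open>\<beta> i \<in> {1..n}\<close> by auto
  next
    case False
    thus ?thesis using assms(1,2) unfolding substs_def by auto
  qed
qed

lemma tuple_sub_surj: assumes "xs \<in> tuples (set Fs) k" "length Fs = n"
  shows "\<exists>\<beta>\<in>substs k n. xs = tuple_sub k \<beta> Fs"
proof -
  define \<beta> where "\<beta> i = (if i \<in> {1..k} then (SOME j. j < n \<and> Fs ! j = xs ! (i - 1)) + 1 else 0)" for i
  have P: "(SOME j. j < n \<and> Fs ! j = xs ! (i - 1)) < n \<and> Fs ! (SOME j. j < n \<and> Fs ! j = xs ! (i - 1)) = xs ! (i - 1)"
    if "i \<in> {1..k}" for i
  proof (rule someI_ex)
    have "xs ! (i - 1) \<in> set Fs" using assms that unfolding tuples_def by auto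
    thus "\<exists>j. j < n \<and> Fs ! j = xs ! (i - 1)" using assms(2) by (auto simp: in_set_conv_nth)
  qed
  have "\<beta> \<in> substs k n" unfolding substs_def \<beta>_def using P by (auto simp: Suc_le_eq)
  moreover have "xs = tuple_sub k \<beta> Fs"
  proof (rule nth_equalityI)
    show "length xs = length (tuple_sub k \<beta> Fs)" using assms unfolding tuples_def tuple_sub_def by simp
    fix i assume "i < length xs"
    hence i: "i < k" using assms unfolding tuples_def by simp
    hence "tuple_sub k \<beta> Fs ! i = Fs ! (\<beta> (Suc i) - 1)" by (rule tuple_sub_nth)
    also have "\<dots> = xs ! i" using P[of "Suc i"] i unfolding \<beta>_def by simp
    finally show "xs ! i = tuple_sub k \<beta> Fs ! i" by simp
  qed
  ultimately show ?thesis by blast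
qed

lemma substs_comp: assumes "\<alpha> \<in> substs m k" "\<beta> \<in> substs k n"
  shows "\<beta> \<circ> \<alpha> \<in> substs m n"
  using assms unfolding substs_def by auto

lemma tuple_sub_comp: assumes "\<alpha> \<in> substs m k" "\<beta> \<in> substs k n"
  shows "tuple_sub m \<alpha> (tuple_sub k \<beta> Fs) = tuple_sub m (\<beta> \<circ> \<alpha>) Fs"
  unfolding tuple_sub_def
proof (rule map_cong[OF refl])
  fix i assume "i \<in> set [1..<Suc m]"
  hence "\<alpha> i \<in> {1..k}" using assms(1) unfolding substs_def by auto
  thus "map (\<lambda>i. Fs ! (\<beta> i - 1)) [1..<Suc k] ! (\<alpha> i - 1) = Fs ! ((\<beta> \<circ> \<alpha>) i - 1)"
  proof -
    have "\<alpha> i - 1 < k" "Suc (\<alpha> i - 1) = \<alpha> i" using \<open>\<alpha> i \<in> {1..k}\<close> by auto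
    from tuple_sub_nth[OF this(1), of \<beta> Fs] this(2)
    show ?thesis unfolding tuple_sub_def by simp
  qed
qed

theorem lemma3p3:
  fixes L :: "('a, 'c) pqf_alg_scheme" and n :: nat and F :: "'a set"
    and Fs :: "'w list"
  assumes "pqf_algebra L"
    and "prime_filter (pcar L n) (pjoin L n) (pmeet L n) F"
    and "length Fs = n" and "distinct Fs"
  shows "pqf_hom L (A_alg (set Fs))
           (\<lambda>k r. {tuple_sub k \<alpha> Fs | \<alpha>. \<alpha> \<in> substs k n \<and> psub L k n \<alpha> r \<in> F})"
proof -
  define \<phi> where "\<phi> = (\<lambda>k r. {tuple_sub k \<alpha> Fs | \<alpha>. \<alpha> \<in> substs k n \<and> psub L k n \<alpha> r \<in> F})"
  have bdl: "bounded_distrib_lattice (pcar L k) (pzero L k) (pone L k) (pjoin L k) (pmeet L k)" for k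
    using assms(1) unfolding pqf_algebra_def by blast
  have sub: "\<And>m k \<alpha>. \<alpha> \<in> substs m k \<Longrightarrow>
        (\<forall>r\<in>pcar L m. psub L m k \<alpha> r \<in> pcar L k) \<and>
        psub L m k \<alpha> (pzero L m) = pzero L k \<and>
        psub L m k \<alpha> (pone L m) = pone L k \<and>
        (\<forall>r\<in>pcar L m. \<forall>s\<in>pcar L m.
           psub L m k \<alpha> (pjoin L m r s) = pjoin L k (psub L m k \<alpha> r) (psub L m k \<alpha> s) \<and>
           psub L m k \<alpha> (pmeet L m r s) = pmeet L k (psub L m k \<alpha> r) (psub L m k \<alpha> s))"
    using assms(1) unfolding pqf_algebra_def by blast
  have comp: "\<And>k m p \<alpha> \<beta>. \<alpha> \<in> substs k m \<Longrightarrow> \<beta> \<in> substs m p \<Longrightarrow>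
        (\<forall>r\<in>pcar L k. psub L k p (\<beta> \<circ> \<alpha>) r = psub L m p \<beta> (psub L k m \<alpha> r))"
    using assms(1) unfolding pqf_algebra_def by blast
  note pf = assms(2)
  have F0: "pzero L n \<notin> F" using pf_zero[OF bdl pf] .
  have F1: "pone L n \<in> F" using pf_one[OF bdl pf] .
  have h1: "\<phi> k r \<in> pcar (A_alg (set Fs)) k" for k r
    unfolding \<phi>_def A_alg_def using tuple_sub_in assms(3) by fastforce
  have h2: "\<phi> k (pzero L k) = {}" for k
    unfolding \<phi>_def using sub F0 by auto
  have h3: "\<phi> k (pone L k) = tuples (set Fs) k" for k
  proof
    show "\<phi> k (pone L k) \<subseteq> tuples (set Fs) k" using h1 unfolding A_alg_def by auto
    show "tuples (set Fs) k \<subseteq> \<phi> k (pone L k)"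
    proof
      fix xs assume "xs \<in> tuples (set Fs) k"
      then obtain \<beta> where "\<beta> \<in> substs k n" "xs = tuple_sub k \<beta> Fs"
        using tuple_sub_surj assms(3) by blast
      thus "xs \<in> \<phi> k (pone L k)" unfolding \<phi>_def using sub F1 by auto
    qed
  qed
  have h4: "\<phi> k (pjoin L k r s) = \<phi> k r \<union> \<phi> k s \<and> \<phi> k (pmeet L k r s) = \<phi> k r \<inter> \<phi> k s"
    if r: "r \<in> pcar L k" and s: "s \<in> pcar L k" for k r s
  proof
    have J: "psub L k n \<alpha> (pjoin L k r s) \<in> F \<longleftrightarrow> psub L k n \<alpha> r \<in> F \<or> psub L k n \<alpha> s \<in> F"
      if "\<alpha> \<in> substs k n" for \<alpha>
      using sub[OF that] r s pf_join[OF bdl pf] by simp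
    show "\<phi> k (pjoin L k r s) = \<phi> k r \<union> \<phi> k s" unfolding \<phi>_def using J by blast
    have M: "psub L k n \<alpha> (pmeet L k r s) \<in> F \<longleftrightarrow> psub L k n \<alpha> r \<in> F \<and> psub L k n \<alpha> s \<in> F"
      if "\<alpha> \<in> substs k n" for \<alpha>
      using sub[OF that] r s pf_meet[OF bdl pf] by simp
    show "\<phi> k (pmeet L k r s) = \<phi> k r \<inter> \<phi> k s"
    proof
      show "\<phi> k (pmeet L k r s) \<subseteq> \<phi> k r \<inter> \<phi> k s" unfolding \<phi>_def using M by blast
      show "\<phi> k r \<inter> \<phi> k s \<subseteq> \<phi> k (pmeet L k r s)"
      proof
        fix xs assume "xs \<in> \<phi> k r \<inter> \<phi> k s"
        then obtain \<alpha> \<beta> where a: "xs = tuple_sub k \<alpha> Fs" "\<alpha> \<in> substs k n" "psub L k n \<alpha> r \<in> F"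
          and b: "xs = tuple_sub k \<beta> Fs" "\<beta> \<in> substs k n" "psub L k n \<beta> s \<in> F"
          unfolding \<phi>_def by blast
        have "\<alpha> = \<beta>" using tuple_sub_inj[OF a(2) b(2) assms(3,4)] a(1) b(1) by simp
        thus "xs \<in> \<phi> k (pmeet L k r s)" unfolding \<phi>_def using M a b by blast
      qed
    qed
  qed
  have h5: "\<phi> k (psub L m k \<alpha> r) = {xs \<in> tuples (set Fs) k. tuple_sub m \<alpha> xs \<in> \<phi> m r}"
    if a: "\<alpha> \<in> substs m k" and r: "r \<in> pcar L m" for m k \<alpha> r
  proof
    show "\<phi> k (psub L m k \<alpha> r) \<subseteq> {xs \<in> tuples (set Fs) k. tuple_sub m \<alpha> xs \<in> \<phi> m r}"
    proof
      fix xs assume "xs \<in> \<phi> k (psub L m k \<alpha> r)"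
      then obtain \<beta> where b: "xs = tuple_sub k \<beta> Fs" "\<beta> \<in> substs k n" "psub L k n \<beta> (psub L m k \<alpha> r) \<in> F"
        unfolding \<phi>_def by blast
      have "psub L m n (\<beta> \<circ> \<alpha>) r \<in> F" using comp[OF a b(2)] r b(3) by simp
      moreover have "tuple_sub m \<alpha> xs = tuple_sub m (\<beta> \<circ> \<alpha>) Fs" using tuple_sub_comp[OF a b(2)] b(1) by simp
      ultimately have "tuple_sub m \<alpha> xs \<in> \<phi> m r" unfolding \<phi>_def using substs_comp[OF a b(2)] by blast
      moreover have "xs \<in> tuples (set Fs) k" using b tuple_sub_in assms(3) by blast
      ultimately show "xs \<in> {xs \<in> tuples (set Fs) k. tuple_sub m \<alpha> xs \<in> \<phi> m r}" by blast
    qed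
    show "{xs \<in> tuples (set Fs) k. tuple_sub m \<alpha> xs \<in> \<phi> m r} \<subseteq> \<phi> k (psub L m k \<alpha> r)"
    proof
      fix xs assume "xs \<in> {xs \<in> tuples (set Fs) k. tuple_sub m \<alpha> xs \<in> \<phi> m r}"
      hence x: "xs \<in> tuples (set Fs) k" "tuple_sub m \<alpha> xs \<in> \<phi> m r" by auto
      then obtain \<gamma> where g: "tuple_sub m \<alpha> xs = tuple_sub m \<gamma> Fs" "\<gamma> \<in> substs m n" "psub L m n \<gamma> r \<in> F"
        unfolding \<phi>_def by blast
      obtain \<beta> where b: "\<beta> \<in> substs k n" "xs = tuple_sub k \<beta> Fs"
        using tuple_sub_surj[OF x(1) assms(3)] by blast
      have "tuple_sub m (\<beta> \<circ> \<alpha>) Fs = tuple_sub m \<gamma> Fs" using tuple_sub_comp[OF a b(1), of Fs] b(2) g(1) by simp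
      hence "\<beta> \<circ> \<alpha> = \<gamma>" using tuple_sub_inj[OF substs_comp[OF a b(1)] g(2) assms(3,4)] by simp
      hence "psub L k n \<beta> (psub L m k \<alpha> r) \<in> F" using comp[OF a b(1)] r g(3) by simp
      thus "xs \<in> \<phi> k (psub L m k \<alpha> r)" unfolding \<phi>_def using b by blast
    qed
  qed
  have "pqf_hom L (A_alg (set Fs)) \<phi>"
    unfolding pqf_hom_def using h1 h2 h3 h4 h5 by (simp add: A_alg_def)
  thus ?thesis unfolding \<phi>_def .
qed

end
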